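(* For each $\beta>1$ and $0<\eta<1/2$ there exists $d_0$ such that for all $d\ge d_0$, with high probability $G_{n,d}$ has $(\beta,\eta)$-expansion.
   Context: $G_{n,d}$ is the uniformly random $d$-regular graph on $\{1,\dots,n\}$ ($n$ even when $d$ is odd); "with high probability" means with probability $1-o(1)$ as $n\to\infty$. For a graph $G=(V,E)$ and $T\subseteq V$, $N(T)$ denotes the set of vertices adjacent to some vertex of $T$. Given $\beta>1$ and $0<\eta<1$, $G$ has $(\beta,\eta)$-expansion if every $T\subset V$ with $|T|\le(1-\eta)|V|/\beta$ satisfies $|T\cup N(T)|\ge\beta|T|$. *)

theory Defs
  imports "HOL-Probability.Probability"
begin

definition simple_graph :: "'a set \<Rightarrow> 'a set set \<Rightarrow> bool" where
  "simple_graph V E \<longleftrightarrow> (\<forall>e\<in>E. e \<subseteq> V \<and> card e = 2)"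

definition degree :: "'a set set \<Rightarrow> 'a \<Rightarrow> nat" where
  "degree E v = card {e\<in>E. v \<in> e}"

definition regular_graph :: "nat \<Rightarrow> 'a set \<Rightarrow> 'a set set \<Rightarrow> bool" where
  "regular_graph d V E \<longleftrightarrow> simple_graph V E \<and> (\<forall>v\<in>V. degree E v = d)"

definition nbhd :: "'a set set \<Rightarrow> 'a set \<Rightarrow> 'a set" where
  "nbhd E T = {v. \<exists>u\<in>T. {u, v} \<in> E}"

definition has_expansion :: "real \<Rightarrow> real \<Rightarrow> 'a set \<Rightarrow> 'a set set \<Rightarrow> bool" where
  "has_expansion \<beta> \<eta> V E \<longleftrightarrow>
     (\<forall>T. T \<subseteq> V \<and> real (card T) \<le> (1 - \<eta>) * real (card V) / \<beta>
          \<longrightarrow> real (card (T \<union> nbhd E T)) \<ge> \<beta> * real (card T))"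

definition regular_graphs :: "nat \<Rightarrow> nat \<Rightarrow> nat set set set" where
  "regular_graphs n d = {E. regular_graph d {1..n} E}"

definition G_nd :: "nat \<Rightarrow> nat \<Rightarrow> nat set set pmf" where
  "G_nd n d = pmf_of_set (regular_graphs n d)"

end

theory Submission
  imports Defs
begin

definition nb :: "'a set set \<Rightarrow> 'a \<Rightarrow> 'a set" where
  "nb E v = {u. {v,u} \<in> E}"

lemma sg_edge: assumes "simple_graph V E" "{u,v} \<in> E" shows "u \<noteq> v \<and> u \<in> V \<and> v \<in> V"
proof -
  have "{u,v} \<subseteq> V" "card {u,v} = 2" using assms unfolding simple_graph_def by auto
  then show ?thesis by (cases "u = v") auto
qed

lemma nb_sub: assumes "simple_graph V E" shows "nb E v \<subseteq> V"
  unfolding nb_def using sg_edge[OF assms] by blast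

lemma deg_nb: assumes "simple_graph V E" shows "degree E v = card (nb E v)"
proof -
  have "bij_betw (\<lambda>u. {v,u}) (nb E v) {e\<in>E. v\<in>e}"
  proof (rule bij_betwI')
    fix x y assume "x \<in> nb E v" "y \<in> nb E v"
    then have "v \<noteq> x" "v \<noteq> y" using sg_edge[OF assms] unfolding nb_def by auto
    then show "({v, x} = {v, y}) = (x = y)" by (auto simp: doubleton_eq_iff)
  next
    fix x assume "x \<in> nb E v" then show "{v, x} \<in> {e \<in> E. v \<in> e}" unfolding nb_def by auto
  next
    fix e assume "e \<in> {e \<in> E. v \<in> e}"
    then have "e \<in> E" "v \<in> e" by auto
    then have "card e = 2" using assms unfolding simple_graph_def by auto
    then obtain a b where ab: "e = {a,b}" "a \<noteq> b" by (meson card_2_iff)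
    then show "\<exists>u\<in>nb E v. e = {v, u}" using \<open>v\<in>e\<close> \<open>e\<in>E\<close> unfolding nb_def
      by (auto simp: insert_commute)
  qed
  then show ?thesis unfolding degree_def by (simp add: bij_betw_same_card)
qed

lemma reg_card_nb: "regular_graph d V E \<Longrightarrow> v \<in> V \<Longrightarrow> card (nb E v) = d"
  unfolding regular_graph_def using deg_nb by metis

lemma reg_finite_nb: "regular_graph d V E \<Longrightarrow> finite V \<Longrightarrow> finite (nb E v)"
  unfolding regular_graph_def using nb_sub finite_subset by metis

lemma card_Sigma_nb:
  assumes "regular_graph d V E" "finite V" "U \<subseteq> V"
  shows "card (SIGMA u:U. nb E u) = d * card U"
proof -
  have "card (SIGMA u:U. nb E u) = (\<Sum>u\<in>U. card (nb E u))"
    by (rule card_SigmaI) (use assms finite_subset reg_finite_nb in auto)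
  also have "\<dots> = (\<Sum>u\<in>U. d)" by (rule sum.cong[OF refl]) (meson assms(1) assms(3) reg_card_nb subsetD)
  finally show ?thesis by simp
qed

lemma card_swap1: "finite A \<Longrightarrow> od \<in> A \<Longrightarrow> nw \<notin> A \<Longrightarrow> card (insert nw (A - {od})) = card A"
  by (metis card_Diff1_less card_Suc_Diff1 card_insert_disjoint finite_Diff Diff_iff)

lemma swapset: assumes "R = {r,r'}" "v\<in>r" "v\<notin>r'" "Nw = {nw,nw'}" "v\<in>nw" "v\<notin>nw'"
  shows "{e\<in>(E - R) \<union> Nw. v\<in>e} = insert nw ({e\<in>E. v\<in>e} - {r})"
  using assms by auto

locale sws = fixes n d :: nat and T W :: "nat set"
  assumes T: "T \<subseteq> {1..n}" and W: "W \<subseteq> {1..n}" and TW: "T \<inter> W = {}"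
begin

definition "RG = regular_graphs n d"
definition PP where "PP E = {(a,b). a\<in>T \<and> b\<in>W \<and> {a,b}\<in>E}"
definition CC where "CC k = {E\<in>RG. card (PP E) = k}"
definition AA where "AA E = {(a,x). a\<in>T \<and> {a,x}\<in>E \<and> x\<notin>W}"
definition BB where "BB E = {(b,y). b\<in>W \<and> {b,y}\<in>E \<and> y\<notin>T}"
definition fwd where "fwd E = {z \<in> AA E \<times> BB E. {fst (fst z), fst (snd z)} \<notin> E \<and> {snd (fst z), snd (snd z)} \<notin> E \<and> snd (fst z) \<noteq> snd (snd z)}"
definition sw :: "nat set set \<Rightarrow> (nat\<times>nat)\<times>(nat\<times>nat) \<Rightarrow> nat set set" where
  "sw E \<tau> = (case \<tau> of ((a,x),(b,y)) \<Rightarrow> (E - {{a,x},{b,y}}) \<union> {{a,b},{x,y}})"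
definition bck where "bck E = {((a,x),(b,y)). a\<in>T \<and> b\<in>W \<and> {a,b}\<in>E \<and> x\<in>{1..n}-W \<and> {x,y}\<in>E}"

lemma RG_sub: "RG \<subseteq> Pow (Pow {1..n})"
  unfolding RG_def regular_graphs_def regular_graph_def simple_graph_def by auto

lemma fin_RG: "finite RG"
  using RG_sub finite_subset by blast

lemma RG_fin_E: "E \<in> RG \<Longrightarrow> finite E"
  using RG_sub by (meson Pow_iff finite_Pow_iff finite_atLeastAtMost finite_subset subsetD)

lemma RG_reg: "E \<in> RG \<Longrightarrow> regular_graph d {1..n} E"
  unfolding RG_def regular_graphs_def by auto

lemma RG_sg: "E \<in> RG \<Longrightarrow> simple_graph {1..n} E"
  using RG_reg regular_graph_def by blast

lemma PP_fin: "finite (PP E)"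
proof -
  have "PP E \<subseteq> T \<times> W" unfolding PP_def by auto
  then show ?thesis using T W finite_subset by (metis finite_SigmaI finite_atLeastAtMost)
qed

context
  fixes E a x b y
  assumes E: "E \<in> RG" and tau: "((a,x),(b,y)) \<in> fwd E"
begin

lemma tau_facts: "a\<in>T" "b\<in>W" "x\<notin>W" "y\<notin>T" "{a,x}\<in>E" "{b,y}\<in>E" "{a,b}\<notin>E" "{x,y}\<notin>E" "x\<noteq>y"
  using tau unfolding fwd_def AA_def BB_def by auto

lemma tau_dist: "a\<noteq>x" "b\<noteq>y" "a\<noteq>b" "a\<noteq>y" "x\<noteq>b" "a\<in>{1..n}" "x\<in>{1..n}" "b\<in>{1..n}" "y\<in>{1..n}"
  using tau_facts sg_edge[OF RG_sg[OF E]] TW by blast+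

lemma sw_eq: "sw E ((a,x),(b,y)) = (E - {{a,x},{b,y}}) \<union> {{a,b},{x,y}}"
  unfolding sw_def by simp

lemma sw_RG: "sw E ((a,x),(b,y)) \<in> RG"
proof -
  let ?E' = "(E - {{a,x},{b,y}}) \<union> {{a,b},{x,y}}"
  note f = tau_facts tau_dist
  have sg: "simple_graph {1..n} ?E'"
    using RG_sg[OF E] f unfolding simple_graph_def by auto
  have fin: "finite {e\<in>E. v\<in>e}" for v using RG_fin_E[OF E] by auto
  have degE: "v \<in> {1..n} \<Longrightarrow> card {e\<in>E. v\<in>e} = d" for v
    using RG_reg[OF E] unfolding regular_graph_def degree_def by auto
  have deg: "card {e\<in>?E'. v\<in>e} = card {e\<in>E. v\<in>e}" for v
  proof -
    have nE: "{a,b} \<notin> {e\<in>E. v\<in>e}" "{x,y} \<notin> {e\<in>E. v\<in>e}" using f by auto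
    consider "v = a" | "v = x" | "v = b" | "v = y" | "v \<notin> {a,x,b,y}" by blast
    then show ?thesis
    proof cases
      case 1
      have "{e\<in>?E'. v\<in>e} = insert {a,b} ({e\<in>E. v\<in>e} - {{a,x}})"
        by (rule swapset[of "{{a,x},{b,y}}" "{a,x}" "{b,y}" v "{{a,b},{x,y}}" "{a,b}" "{x,y}"]) (use 1 f in auto)
      then show ?thesis using card_swap1[OF fin] 1 f nE by auto
    next
      case 2
      have "{e\<in>?E'. v\<in>e} = insert {x,y} ({e\<in>E. v\<in>e} - {{a,x}})"
        by (rule swapset[of "{{a,x},{b,y}}" "{a,x}" "{b,y}" v "{{a,b},{x,y}}" "{x,y}" "{a,b}"]) (use 2 f in auto)
      then show ?thesis using card_swap1[OF fin] 2 f nE by auto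
    next
      case 3
      have "{e\<in>?E'. v\<in>e} = insert {a,b} ({e\<in>E. v\<in>e} - {{b,y}})"
        by (rule swapset[of "{{a,x},{b,y}}" "{b,y}" "{a,x}" v "{{a,b},{x,y}}" "{a,b}" "{x,y}"]) (use 3 f in auto)
      then show ?thesis using card_swap1[OF fin] 3 f nE by auto
    next
      case 4
      have "{e\<in>?E'. v\<in>e} = insert {x,y} ({e\<in>E. v\<in>e} - {{b,y}})"
        by (rule swapset[of "{{a,x},{b,y}}" "{b,y}" "{a,x}" v "{{a,b},{x,y}}" "{x,y}" "{a,b}"]) (use 4 f in auto)
      then show ?thesis using card_swap1[OF fin] 4 f nE by auto
    next
      case 5
      have "{e\<in>?E'. v\<in>e} = {e\<in>E. v\<in>e}" using 5 by auto
      then show ?thesis by simp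
    qed
  qed
  show ?thesis unfolding sw_eq RG_def regular_graphs_def regular_graph_def degree_def
    using sg deg degE by simp
qed

lemma PP_sw: "PP (sw E ((a,x),(b,y))) = insert (a,b) (PP E \<union> (if x\<in>T \<and> y\<in>W then {(x,y)} else {}))"
  using tau_facts tau_dist TW unfolding sw_eq PP_def by (auto simp: doubleton_eq_iff)

lemma PP_new: "(a,b) \<notin> PP E" "(x,y) \<notin> PP E" "(x,y) \<noteq> (a,b)"
  using tau_facts tau_dist unfolding PP_def by auto

lemma card_PP_sw: "card (PP (sw E ((a,x),(b,y)))) = card (PP E) + 1 \<or> card (PP (sw E ((a,x),(b,y)))) = card (PP E) + 2"
  using PP_new PP_fin unfolding PP_sw by (auto simp: card_insert_if)

lemma unsw: "E = (sw E ((a,x),(b,y)) - {{a,b},{x,y}}) \<union> {{a,x},{b,y}}"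
  using tau_facts tau_dist unfolding sw_eq by (auto simp: doubleton_eq_iff)

lemma bck_sw: "((a,x),(b,y)) \<in> bck (sw E ((a,x),(b,y)))"
  using tau_facts tau_dist unfolding sw_eq bck_def by (auto simp: doubleton_eq_iff)

end
end

context sws begin

lemma fwd_sub: "fwd E \<subseteq> AA E \<times> BB E" unfolding fwd_def by auto

lemma AA_fin: "E \<in> RG \<Longrightarrow> finite (AA E)"
proof -
  assume E: "E \<in> RG"
  have "AA E \<subseteq> {1..n} \<times> {1..n}" unfolding AA_def using sg_edge[OF RG_sg[OF E]] by auto
  then show ?thesis by (meson finite_SigmaI finite_atLeastAtMost finite_subset)
qed

lemma BB_fin: "E \<in> RG \<Longrightarrow> finite (BB E)"
proof -
  assume E: "E \<in> RG"
  have "BB E \<subseteq> {1..n} \<times> {1..n}" unfolding BB_def using sg_edge[OF RG_sg[OF E]] by auto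
  then show ?thesis by (meson finite_SigmaI finite_atLeastAtMost finite_subset)
qed

lemma fwd_fin: "E \<in> RG \<Longrightarrow> finite (fwd E)"
  using fwd_sub AA_fin BB_fin by (meson finite_SigmaI finite_subset)

lemma bck_sub: "E \<in> RG \<Longrightarrow> bck E \<subseteq> (\<lambda>((a,b),(x,y)). ((a,x),(b,y))) ` (PP E \<times> (SIGMA x:{1..n}-W. nb E x))"
proof
  fix z assume "z \<in> bck E"
  then obtain a x b y where z: "z = ((a,x),(b,y))" "a\<in>T" "b\<in>W" "{a,b}\<in>E" "x\<in>{1..n}-W" "{x,y}\<in>E"
    unfolding bck_def by auto
  then have "((a,b),(x,y)) \<in> PP E \<times> (SIGMA x:{1..n}-W. nb E x)" unfolding PP_def nb_def by auto
  then show "z \<in> (\<lambda>((a,b),(x,y)). ((a,x),(b,y))) ` (PP E \<times> (SIGMA x:{1..n}-W. nb E x))"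
    using z by force
qed

lemma bck_card: "E \<in> RG \<Longrightarrow> card (bck E) \<le> card (PP E) * (d * card ({1..n}-W))"
proof -
  assume E: "E \<in> RG"
  have f2: "finite (SIGMA x:{1..n}-W. nb E x)"
    using reg_finite_nb[OF RG_reg[OF E]] by auto
  have "card (bck E) \<le> card (PP E \<times> (SIGMA x:{1..n}-W. nb E x))"
    by (rule order.trans[OF card_mono[OF _ bck_sub[OF E]] card_image_le])
       (use PP_fin f2 in auto)
  also have "\<dots> = card (PP E) * (d * card ({1..n}-W))"
    using card_Sigma_nb[OF RG_reg[OF E]] by (simp add: card_cartesian_product)
  finally show ?thesis .
qed

lemma bck_fin: "E \<in> RG \<Longrightarrow> finite (bck E)"
proof -
  assume E: "E \<in> RG"
  have f2: "finite (SIGMA x:{1..n}-W. nb E x)"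
    using reg_finite_nb[OF RG_reg[OF E]] by auto
  show ?thesis using bck_sub[OF E] PP_fin f2 by (meson finite_SigmaI finite_imageI finite_subset)
qed

lemma card_SS_le:
  assumes E: "E \<in> RG" and X: "finite X" and f: "\<And>p. p \<in> X \<Longrightarrow> f p \<subseteq> {1..n} \<and> card (f p) \<le> c"
  shows "card (SIGMA p:X. SIGMA b:f p. nb E b) \<le> card X * c * d"
proof -
  have fin: "finite (f p)" if "p\<in>X" for p using f[OF that] finite_subset by blast
  have "card (SIGMA p:X. SIGMA b:f p. nb E b) = (\<Sum>p\<in>X. card (SIGMA b:f p. nb E b))"
    apply (rule card_SigmaI[OF X])
    using fin reg_finite_nb[OF RG_reg[OF E]] by auto
  also have "\<dots> = (\<Sum>p\<in>X. d * card (f p))"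
    using card_Sigma_nb[OF RG_reg[OF E]] f by (intro sum.cong) auto
  also have "\<dots> \<le> (\<Sum>p\<in>X. d * c)" using f by (intro sum_mono) auto
  finally show ?thesis by (simp add: ac_simps)
qed

lemma fwd_card_nat: assumes E: "E \<in> RG"
  shows "card (AA E) * card (BB E) \<le> card (fwd E) + card (AA E) * d * d + card (AA E) * (d+1) * d"
proof -
  let ?b1 = "SIGMA p:AA E. SIGMA b:nb E (fst p). nb E b"
  let ?b2 = "SIGMA p:AA E. SIGMA y:insert (snd p) (nb E (snd p)). nb E y"
  have sub: "AA E \<times> BB E \<subseteq> fwd E \<union> ?b1 \<union> (\<lambda>(p,(y,b)). (p,(b,y))) ` ?b2"
  proof
    fix z assume z: "z \<in> AA E \<times> BB E"
    then obtain a x b y where zz: "z = ((a,x),(b,y))" "(a,x) \<in> AA E" "(b,y) \<in> BB E" by auto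
    show "z \<in> fwd E \<union> ?b1 \<union> (\<lambda>(p,(y,b)). (p,(b,y))) ` ?b2"
    proof (cases "z \<in> fwd E")
      case False
      then have "{a,b} \<in> E \<or> {x,y} \<in> E \<or> x = y" using z zz unfolding fwd_def by auto
      moreover have "{b,y} \<in> E" using zz unfolding BB_def by auto
      ultimately have "z \<in> ?b1 \<or> ((a,x),(y,b)) \<in> ?b2" using zz unfolding nb_def
        by (auto simp: insert_commute)
      then show ?thesis using zz by force
    qed simp
  qed
  have fb1: "finite ?b1" using AA_fin[OF E] reg_finite_nb[OF RG_reg[OF E]] by auto
  have fb2: "finite ?b2" using AA_fin[OF E] reg_finite_nb[OF RG_reg[OF E]] by auto
  have c1: "card ?b1 \<le> card (AA E) * d * d"
    apply (rule card_SS_le[OF E AA_fin[OF E]])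
    using nb_sub[OF RG_sg[OF E]] reg_card_nb[OF RG_reg[OF E]] unfolding AA_def
    by (auto simp: nb_def dest: sg_edge[OF RG_sg[OF E]])
  have c2: "card ?b2 \<le> card (AA E) * (d+1) * d"
    apply (rule card_SS_le[OF E AA_fin[OF E]])
    using nb_sub[OF RG_sg[OF E]] reg_card_nb[OF RG_reg[OF E]] reg_finite_nb[OF RG_reg[OF E]] unfolding AA_def
    by (auto simp: nb_def card_insert_if dest: sg_edge[OF RG_sg[OF E]])
  have "card (AA E) * card (BB E) = card (AA E \<times> BB E)" by (simp add: card_cartesian_product)
  also have "\<dots> \<le> card (fwd E \<union> ?b1 \<union> (\<lambda>(p,(y,b)). (p,(b,y))) ` ?b2)"
    by (rule card_mono[OF _ sub]) (use fwd_fin[OF E] fb1 fb2 in auto)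
  also have "\<dots> \<le> card (fwd E) + card ?b1 + card ((\<lambda>(p,(y,b)). (p,(b,y))) ` ?b2)"
    by (meson card_Un_le add_le_mono order.trans order_refl)
  also have "\<dots> \<le> card (fwd E) + card ?b1 + card ?b2" using card_image_le[OF fb2] by simp
  finally show ?thesis using c1 c2 by linarith
qed

end

context sws begin

lemma card_AA: assumes E: "E \<in> RG" shows "card (AA E) + card (PP E) = d * card T"
proof -
  have eq: "(SIGMA a:T. nb E a) = AA E \<union> PP E" unfolding AA_def PP_def nb_def by auto
  have dj: "AA E \<inter> PP E = {}" unfolding AA_def PP_def by auto
  have "d * card T = card (AA E \<union> PP E)" using card_Sigma_nb[OF RG_reg[OF E] _ T] eq by simp
  also have "\<dots> = card (AA E) + card (PP E)" using card_Un_disjoint[OF AA_fin[OF E] PP_fin dj] .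
  finally show ?thesis by simp
qed

lemma card_BB: assumes E: "E \<in> RG" shows "card (BB E) + card (PP E) = d * card W"
proof -
  have eq: "(SIGMA a:W. nb E a) = BB E \<union> prod.swap ` PP E" unfolding BB_def PP_def nb_def
    by (auto simp: insert_commute)
  have dj: "BB E \<inter> prod.swap ` PP E = {}" unfolding BB_def PP_def by auto
  have "d * card W = card (BB E \<union> prod.swap ` PP E)" using card_Sigma_nb[OF RG_reg[OF E] _ W] eq by simp
  also have "\<dots> = card (BB E) + card (prod.swap ` PP E)"
    using card_Un_disjoint[OF BB_fin[OF E] _ dj] PP_fin by simp
  also have "card (prod.swap ` PP E) = card (PP E)" by (simp add: card_image)
  finally show ?thesis by simp
qed

lemma fwd_lb: assumes E: "E \<in> CC k"
  shows "(real d * card T - k) * (real d * card W - k - (2*d^2 + d)) \<le> real (card (fwd E))"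
proof -
  have E': "E \<in> RG" and k: "card (PP E) = k" using E unfolding CC_def by auto
  have A: "real (card (AA E)) = real d * card T - k" using card_AA[OF E'] k
    by (metis add_diff_cancel_right' of_nat_add of_nat_mult)
  have B: "real (card (BB E)) = real d * card W - k" using card_BB[OF E'] k
    by (metis add_diff_cancel_right' of_nat_add of_nat_mult)
  have "real (card (AA E) * card (BB E)) \<le> real (card (fwd E) + card (AA E) * d * d + card (AA E) * (d+1) * d)"
    using fwd_card_nat[OF E'] by linarith
  then have "real (card (AA E)) * real (card (BB E)) \<le> real (card (fwd E)) + real (card (AA E)) * (2*d^2+d)"
    by (simp add: algebra_simps power2_eq_square)
  then show ?thesis unfolding A B by (simp add: algebra_simps)
qed

lemma fin_CC: "finite (CC k)" unfolding CC_def using fin_RG by auto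

lemma switch_ineq:
  assumes F: "\<forall>E\<in>CC k. F \<le> real (card (fwd E))"
  shows "real (card (CC k)) * F \<le> (real (card (CC (k+1))) + real (card (CC (k+2)))) * (real (k+2) * (real d * real (card ({1..n}-W))))"
proof -
  let ?M = "real (k+2) * (real d * real (card ({1..n}-W)))"
  let ?S1 = "SIGMA E:CC k. fwd E"
  let ?S2 = "SIGMA E:CC (k+1) \<union> CC (k+2). bck E"
  have fS1: "finite ?S1" using fin_CC fwd_fin unfolding CC_def by auto
  have fS2: "finite ?S2" using fin_CC bck_fin unfolding CC_def by auto
  have "real (card (CC k)) * F = (\<Sum>E\<in>CC k. F)" by simp
  also have "\<dots> \<le> (\<Sum>E\<in>CC k. real (card (fwd E)))" using F by (intro sum_mono) auto
  also have "\<dots> = real (card ?S1)"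
    using card_SigmaI[of "CC k" fwd] fin_CC fwd_fin unfolding CC_def by auto
  also have "card ?S1 \<le> card ?S2"
  proof (rule card_inj_on_le[where f = "\<lambda>(E,\<tau>). (sw E \<tau>, \<tau>)"])
    show "inj_on (\<lambda>(E,\<tau>). (sw E \<tau>, \<tau>)) ?S1"
    proof (rule inj_onI)
      fix z1 z2 assume z1: "z1 \<in> ?S1" and z2: "z2 \<in> ?S1" and eq: "(\<lambda>(E,\<tau>). (sw E \<tau>, \<tau>)) z1 = (\<lambda>(E,\<tau>). (sw E \<tau>, \<tau>)) z2"
      obtain E1 a x b y where 1: "z1 = (E1, ((a,x),(b,y)))" by (metis prod.exhaust)
      obtain E2 a' x' b' y' where 2: "z2 = (E2, ((a',x'),(b',y')))" by (metis prod.exhaust)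
      have same: "a'=a" "x'=x" "b'=b" "y'=y" and sweq: "sw E1 ((a,x),(b,y)) = sw E2 ((a,x),(b,y))"
        using eq 1 2 by auto
      have "E1 = E2"
        using unsw[of E1 a x b y] unsw[of E2 a x b y] z1 z2 1 2 same sweq unfolding CC_def by auto
      then show "z1 = z2" using 1 2 same by simp
    qed
    show "(\<lambda>(E,\<tau>). (sw E \<tau>, \<tau>)) ` ?S1 \<subseteq> ?S2"
    proof
      fix w assume "w \<in> (\<lambda>(E,\<tau>). (sw E \<tau>, \<tau>)) ` ?S1"
      then obtain E a x b y where w: "w = (sw E ((a,x),(b,y)), ((a,x),(b,y)))" and E: "E \<in> CC k"
        and t: "((a,x),(b,y)) \<in> fwd E" by auto
      have ER: "E \<in> RG" using E unfolding CC_def by auto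
      have "sw E ((a,x),(b,y)) \<in> CC (k+1) \<union> CC (k+2)"
        using sw_RG[OF ER t] card_PP_sw[OF ER t] E unfolding CC_def by auto
      then show "w \<in> ?S2" using w bck_sw[OF ER t] by auto
    qed
  qed (rule fS2)
  then have "real (card ?S1) \<le> real (card ?S2)" by simp
  also have "card ?S2 = (\<Sum>E\<in>CC (k+1) \<union> CC (k+2). card (bck E))"
    by (rule card_SigmaI) (use fin_CC bck_fin in \<open>auto simp: CC_def\<close>)
  also have "real \<dots> \<le> (\<Sum>E\<in>CC (k+1) \<union> CC (k+2). ?M)"
    unfolding of_nat_sum
  proof (rule sum_mono)
    fix E assume E: "E \<in> CC (k+1) \<union> CC (k+2)"
    then have ER: "E \<in> RG" and "card (PP E) \<le> k+2" unfolding CC_def by auto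
    then have "card (bck E) \<le> (k+2) * (d * card ({1..n}-W))"
      using bck_card[OF ER] by (meson dual_order.trans mult_le_mono1)
    then show "real (card (bck E)) \<le> ?M" by (metis of_nat_le_iff of_nat_mult)
  qed
  also have "\<dots> = real (card (CC (k+1) \<union> CC (k+2))) * ?M" by simp
  also have "\<dots> \<le> (real (card (CC (k+1))) + real (card (CC (k+2)))) * ?M"
    by (intro mult_right_mono) (use card_Un_le[of "CC (k+1)" "CC (k+2)"] in auto)
  finally show ?thesis .
qed

end

lemma chain_bound:
  fixes c :: "nat \<Rightarrow> real"
  assumes rec: "\<And>k. k < K \<Longrightarrow> c k \<le> r * (c (k+1) + c (k+2))"
    and bnd: "\<And>k. c k \<le> N" and r: "r \<ge> 0"
  shows "k + 2*m \<le> K \<Longrightarrow> c k \<le> (2*r)^m * N"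
proof (induction m arbitrary: k)
  case 0 then show ?case using bnd by simp
next
  case (Suc m)
  have "c (k+1) \<le> (2*r)^m * N" "c (k+2) \<le> (2*r)^m * N" using Suc by auto
  then have "r * (c (k+1) + c (k+2)) \<le> r * (2 * ((2*r)^m * N))"
    using r by (intro mult_left_mono) auto
  moreover have "c k \<le> r * (c (k+1) + c (k+2))" using rec Suc.prems by auto
  ultimately show ?case by (simp add: algebra_simps)
qed

lemma lin_aux: "4*(m::real) \<le> D \<Longrightarrow> 4*X \<le> D \<Longrightarrow> k \<le> 2*m \<Longrightarrow> D/4 \<le> D - k - X"
  by linarith

context sws begin

lemma CC_le: "card (CC k) \<le> card RG"
  unfolding CC_def by (rule card_mono[OF fin_RG]) auto

lemma CC0_bound:
  assumes d: "d > 0" and t: "card T > 0" and w: "card W > 0"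
    and h1: "4*m \<le> d * card T" and h2: "4*m \<le> d * card W" and h3: "4*(2*d^2+d) \<le> d * card W"
  shows "real (card (CC 0)) \<le> (16 * (2*m+1) * card ({1..n}-W) / (d * card T * card W))^m * card RG"
proof -
  define F where "F = (real d * card T / 2) * (real d * card W / 4)"
  define r where "r = (2*m+1) * d * card ({1..n}-W) / F"
  have Fpos: "F > 0" unfolding F_def using d t w by auto
  have r0: "r \<ge> 0" unfolding r_def using Fpos by auto
  have rec: "real (card (CC k)) \<le> r * (real (card (CC (k+1))) + real (card (CC (k+2))))" if k: "k < 2*m" for k
  proof -
    have "\<forall>E\<in>CC k. F \<le> real (card (fwd E))"
    proof
      fix E assume E: "E \<in> CC k"
      have kk: "real k \<le> 2 * real m" using k by linarith
      have h1': "4 * real m \<le> real d * real (card T)" using h1 by (metis of_nat_le_iff of_nat_mult of_nat_numeral)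
      have h2': "4 * real m \<le> real d * real (card W)" using h2 by (metis of_nat_le_iff of_nat_mult of_nat_numeral)
      have h3'': "real (4*(2*d^2+d)) \<le> real (d * card W)" using h3 by (simp only: of_nat_le_iff)
      have h3': "4 * (2*real d^2 + real d) \<le> real d * real (card W)" using h3'' by simp
      have a: "real d * card T / 2 \<le> real d * card T - k" using h1' kk by linarith
      have b: "real d * card W / 4 \<le> real d * card W - k - (2*d^2 + d)" using lin_aux[OF h2' h3' kk] by simp
      have "F \<le> (real d * card T - k) * (real d * card W - k - (2*d^2 + d))"
      proof -
        have "0 \<le> real d * card T / 2" by simp
        then have a0: "0 \<le> real d * card T - k" using a by linarith
        show ?thesis unfolding F_def by (rule mult_mono[OF a b a0]) simp
      qed
      also have "\<dots> \<le> real (card (fwd E))" by (rule fwd_lb[OF E])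
      finally show "F \<le> real (card (fwd E))" .
    qed
    from switch_ineq[OF this]
    have "real (card (CC k)) * F \<le> (real (card (CC (k+1))) + real (card (CC (k+2)))) * (real (k+2) * (real d * real (card ({1..n}-W))))" .
    also have "\<dots> \<le> (real (card (CC (k+1))) + real (card (CC (k+2)))) * ((2*m+1) * d * card ({1..n}-W))"
    proof (rule mult_left_mono)
      have "real (k+2) \<le> 2*real m + 1" using k by linarith
      then have "real (k+2) * (real d * real (card ({1..n}-W))) \<le> (2*real m + 1) * (real d * real (card ({1..n}-W)))"
        by (rule mult_right_mono) simp
      then show "real (k+2) * (real d * real (card ({1..n}-W))) \<le> (2*m+1) * d * card ({1..n}-W)"
        by (simp add: algebra_simps)
    qed simp
    finally have "real (card (CC k)) \<le> (real (card (CC (k+1))) + real (card (CC (k+2)))) * ((2*m+1) * d * card ({1..n}-W)) / F"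
      using Fpos by (simp add: pos_le_divide_eq)
    then show ?thesis unfolding r_def by (simp add: algebra_simps)
  qed
  have "real (card (CC 0)) \<le> (2*r)^m * card RG"
    by (rule chain_bound[where K = "2*m", OF rec _ r0]) (use CC_le in auto)
  also have "2*r = 16 * (2*m+1) * card ({1..n}-W) / (d * card T * card W)"
    unfolding r_def F_def using d t w by (simp add: field_simps)
  finally show ?thesis .
qed

end

lemma pow_fact_le_exp: "real k ^ k / fact k \<le> exp (real k)"
proof -
  have s: "(\<lambda>j. real k ^ j / fact j) sums exp (real k)"
    using exp_converges[of "real k"] by (simp add: divide_inverse mult.commute)
  have "sum (\<lambda>j. real k ^ j / fact j) {k} \<le> suminf (\<lambda>j. real k ^ j / fact j)"
    by (rule sum_le_suminf) (use s sums_summable in auto)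
  then show ?thesis using sums_unique[OF s] by simp
qed

lemma choose_le_pow_div_fact: "k \<le> n \<Longrightarrow> real (n choose k) \<le> real n ^ k / fact k"
proof -
  assume k: "k \<le> n"
  have "fact k * fact (n - k) * (n choose k) = (fact n :: nat)" by (rule binomial_fact_lemma[OF k])
  then have "(fact n :: nat) = (fact k * (n choose k)) * fact (n-k)" by (simp add: ac_simps)
  then have eq: "fact k * (n choose k) = (fact n div fact (n-k) :: nat)"
    by (simp add: fact_nonzero)
  have "fact k * (n choose k) \<le> n ^ k" using fact_div_fact_le_pow[OF k] eq by simp
  then have "real (fact k * (n choose k)) \<le> real (n ^ k)" by (simp only: of_nat_le_iff)
  then have "fact k * real (n choose k) \<le> real n ^ k" by simp
  then show ?thesis by (simp add: field_simps)
qed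

lemma choose_le_exp: assumes "1 \<le> k" "k \<le> n"
  shows "real (n choose k) \<le> (exp 1 * n / k) ^ k"
proof -
  have "real (n choose k) \<le> real n ^ k / fact k" by (rule choose_le_pow_div_fact[OF assms(2)])
  also have "\<dots> = (real n / k) ^ k * (real k ^ k / fact k)" using assms by (simp add: field_simps power_divide)
  also have "\<dots> \<le> (real n / k) ^ k * exp (real k)"
    by (intro mult_left_mono pow_fact_le_exp) auto
  also have "exp (real k) = exp 1 ^ k" by (metis exp_of_nat_mult mult.right_neutral)
  also have "(real n / k) ^ k * exp 1 ^ k = (exp 1 * n / k) ^ k" by (simp add: power_mult_distrib field_simps)
  finally show ?thesis .
qed

lemma pow_aux: "(x::real)^t * x^(b*t) * y^((b+2)*t) = (x^(b+1) * y^(b+2))^t"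
proof -
  have "(x^(b+1) * y^(b+2))^t = x^((b+1)*t) * y^((b+2)*t)"
    by (simp only: power_mult_distrib power_mult)
  also have "x^((b+1)*t) = x^t * x^(b*t)"
    by (metis add.commute mult.commute mult_Suc_right plus_1_eq_Suc power_add)
  finally show ?thesis by simp
qed

lemma term_bound:
  fixes n t s b q :: nat and C :: real
  assumes t1: "1 \<le> t" and ts: "t \<le> s" and sb: "s \<le> b*t" and sn: "s \<le> n"
    and C0: "0 \<le> C" and C1: "C \<le> 1" and Ce: "exp 1 ^ (b+1) * C \<le> 1/4" and q: "q = b+2"
  shows "real (n choose t) * real (n choose s) * (C*t/n)^(q*t) \<le> (1/2)^t / n"
proof -
  have tn: "t \<le> n" using ts sn by simp
  have npos: "real n > 0" and tpos: "real t > 0" using t1 tn by auto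
  define X where "X = exp 1 * n / t"
  have X1: "X \<ge> 1"
  proof -
    have a: "real n / t \<ge> 1" using tn tpos by simp
    have b: "exp 1 \<ge> (1::real)" by simp
    have "1 * 1 \<le> exp 1 * (real n / t)" by (rule mult_mono[OF b a]) auto
    then show ?thesis unfolding X_def by simp
  qed
  have c1: "real (n choose t) \<le> X ^ t" unfolding X_def by (rule choose_le_exp[OF t1 tn])
  have "real (n choose s) \<le> (exp 1 * n / s) ^ s" by (rule choose_le_exp) (use t1 ts sn in auto)
  also have "\<dots> \<le> X ^ s" unfolding X_def
    by (intro power_mono divide_left_mono) (use ts t1 in auto)
  also have "\<dots> \<le> X ^ (b*t)" by (rule power_increasing[OF sb X1])
  finally have c2: "real (n choose s) \<le> X ^ (b*t)" .
  have base0: "0 \<le> (C*t/n)^(q*t)" using C0 by simp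
  have "real (n choose t) * real (n choose s) * (C*t/n)^(q*t) \<le> X^t * X^(b*t) * (C*t/n)^(q*t)"
    by (intro mult_right_mono mult_mono c1 c2 base0) (use X1 in auto)
  also have "\<dots> = (X^(b+1) * (C*t/n)^(b+2))^t"
    using pow_aux[of X t b "C*t/n"] q by simp
  finally have P: "real (n choose t) * real (n choose s) * (C*t/n)^(q*t) \<le> (X^(b+1) * (C*t/n)^(b+2))^t" .
  have "X^(b+1) * (C*t/n)^(b+2) = exp 1 ^ (b+1) * C^(b+2) * (t/n)"
    unfolding X_def using npos tpos by (simp add: power_mult_distrib power_divide field_simps power_add)
  also have "\<dots> \<le> (1/4) * (t/n)"
  proof -
    have "C^(b+2) \<le> C" using power_decreasing[of 1 "b+2" C] C0 C1 by simp
    then have "exp 1 ^ (b+1) * C^(b+2) \<le> exp 1 ^ (b+1) * C" by (intro mult_left_mono) auto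
    then have "exp 1 ^ (b+1) * C^(b+2) \<le> 1/4" using Ce by linarith
    then show ?thesis using npos tpos by (intro mult_right_mono) auto
  qed
  finally have base: "X^(b+1) * (C*t/n)^(b+2) \<le> (1/4) * (t/n)" .
  have base0: "0 \<le> X^(b+1) * (C*t/n)^(b+2)" using X1 C0 by simp
  have A: "real (n choose t) * real (n choose s) * (C*t/n)^(q*t) \<le> ((1/4) * (t/n))^t"
    by (rule order.trans[OF P power_mono[OF base base0]])
  have "((1/4) * (t/n))^t = (1/4)^t * (t/n)^t" by (rule power_mult_distrib)
  also have "(t/n)^t \<le> (t/n)^1" using t1 tn npos by (intro power_decreasing) auto
  then have "(1/4::real)^t * (t/n)^t \<le> (1/4)^t * (t/n)" by (intro mult_left_mono) auto
  also have "(1/4::real)^t * (t/n) = (t * (1/2)^t) * (1/2)^t / n" by (simp add: power_mult_distrib[symmetric] field_simps)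
  also have "\<dots> \<le> 1 * (1/2)^t / n"
  proof -
    have "real t < 2^t" by (metis of_nat_less_numeral_power_cancel_iff less_exp)
    then have "real t * (1/2)^t \<le> 1" by (simp add: field_simps)
    then show ?thesis using npos by (intro divide_right_mono mult_right_mono) auto
  qed
  finally show ?thesis using A by simp
qed

definition cd :: "nat \<Rightarrow> nat \<Rightarrow> nat \<Rightarrow> nat" where
  "cd n i j = nat ((int j - int i) mod int n)"

lemma cd_lt: "n > 0 \<Longrightarrow> cd n i j < n"
  unfolding cd_def by (simp add: nat_less_iff)

lemma cd_zero: "n > 0 \<Longrightarrow> i \<in> {1..n} \<Longrightarrow> j \<in> {1..n} \<Longrightarrow> cd n i j = 0 \<longleftrightarrow> i = j"
proof -
  assume n: "n > 0" and i: "i \<in> {1..n}" and j: "j \<in> {1..n}"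
  have "cd n i j = 0 \<longleftrightarrow> (int j - int i) mod int n = 0" unfolding cd_def
    using n by (simp add: nat_eq_iff)
  also have "\<dots> \<longleftrightarrow> int n dvd (int j - int i)" by auto
  also have "\<dots> \<longleftrightarrow> i = j"
  proof
    assume dv: "int n dvd (int j - int i)"
    have "\<bar>int j - int i\<bar> < int n" using i j by auto
    then show "i = j" using dv dvd_imp_le_int[of "int j - int i" "int n"]
      by (cases "int j - int i = 0") auto
  qed simp
  finally show ?thesis .
qed

lemma cd_sym: "n > 0 \<Longrightarrow> i \<in> {1..n} \<Longrightarrow> j \<in> {1..n} \<Longrightarrow> i \<noteq> j \<Longrightarrow> cd n j i = n - cd n i j"
proof -
  assume n: "n > 0" and i: "i \<in> {1..n}" and j: "j \<in> {1..n}" and ij: "i \<noteq> j"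
  have "cd n i j \<noteq> 0" using cd_zero[OF n i j] ij by simp
  then have nz: "(int j - int i) mod int n \<noteq> 0" unfolding cd_def by auto
  have "(int i - int j) mod int n = int n - (int j - int i) mod int n"
    using zmod_zminus1_eq_if[of "int j - int i" "int n"] nz by simp
  then show ?thesis unfolding cd_def using n
    by (metis (no_types) nat_diff_distrib' nat_int int_nat_eq pos_mod_sign of_nat_0_less_iff pos_mod_bound less_imp_le)
qed

lemma cd_inj: "n > 0 \<Longrightarrow> inj_on (cd n v) {1..n}"
proof (rule inj_onI)
  fix j j' assume n: "n > 0" and j: "j \<in> {1..n}" and j': "j' \<in> {1..n}" and eq: "cd n v j = cd n v j'"
  have "(int j - int v) mod int n = (int j' - int v) mod int n" using eq n unfolding cd_def
    by (subst eq_nat_nat_iff[symmetric]) auto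
  then have "int n dvd (int j - int v) - (int j' - int v)" by (simp add: mod_eq_dvd_iff)
  then have dv: "int n dvd (int j - int j')" by simp
  have "\<bar>int j - int j'\<bar> < int n" using j j' by auto
  then show "j = j'" using dv dvd_imp_le_int[of "int j - int j'" "int n"]
    by (cases "int j - int j' = 0") auto
qed

lemma cd_surj: "n > 0 \<Longrightarrow> v \<in> {1..n} \<Longrightarrow> \<delta> < n \<Longrightarrow> \<exists>j\<in>{1..n}. cd n v j = \<delta>"
proof -
  assume n: "n > 0" and v: "v \<in> {1..n}" and dl: "\<delta> < n"
  define j where "j = (v - 1 + \<delta>) mod n + 1"
  have jV: "j \<in> {1..n}" unfolding j_def using n by (simp add: Suc_leI)
  have "int j - int v = int ((v - 1 + \<delta>) mod n) - int (v - 1)" unfolding j_def using v by auto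
  then have "(int j - int v) mod int n = (int (v - 1 + \<delta>) - int (v - 1)) mod int n"
    by (simp add: zmod_int mod_diff_left_eq)
  also have "\<dots> = int \<delta>" using dl by simp
  finally show ?thesis using jV unfolding cd_def by (intro bexI[of _ j]) auto
qed

definition circ :: "nat \<Rightarrow> nat set \<Rightarrow> nat set set" where
  "circ n D = {{i,j} | i j. i \<in> {1..n} \<and> j \<in> {1..n} \<and> cd n i j \<in> D}"

lemma circ_reg:
  assumes n: "n > 0" and D: "D \<subseteq> {1..<n}" and sym: "\<And>\<delta>. \<delta> \<in> D \<Longrightarrow> n - \<delta> \<in> D"
  shows "regular_graph (card D) {1..n} (circ n D)"
proof -
  have sg: "simple_graph {1..n} (circ n D)"
    unfolding simple_graph_def circ_def
  proof safe
    fix i j assume i: "i \<in> {1..n}" and j: "j \<in> {1..n}" and c: "cd n i j \<in> D"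
    then have "i \<noteq> j" using cd_zero[OF n i j] D by auto
    then show "card {i,j} = 2" by simp
  qed
  have nbeq: "nb (circ n D) v = {j \<in> {1..n}. cd n v j \<in> D}" if v: "v \<in> {1..n}" for v
  proof safe
    fix j assume "j \<in> nb (circ n D) v"
    then obtain i' j' where e: "{v,j} = {i',j'}" "i' \<in> {1..n}" "j' \<in> {1..n}" "cd n i' j' \<in> D"
      unfolding nb_def circ_def by blast
    then have ne: "i' \<noteq> j'" using cd_zero[OF n, of i' j'] D by auto
    show "j \<in> {1..n}" using e by (auto simp: doubleton_eq_iff)
    show "cd n v j \<in> D"
    proof (cases "v = i'")
      case True then have "j = j'" using e ne by (auto simp: doubleton_eq_iff)
      then show ?thesis using True e by simp
    next
      case False then have "v = j'" "j = i'" using e by (auto simp: doubleton_eq_iff)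
      then show ?thesis using cd_sym[OF n e(2) e(3) ne] sym e(4) by simp
    qed
  next
    fix j assume "j \<in> {1..n}" "cd n v j \<in> D"
    then show "j \<in> nb (circ n D) v" unfolding nb_def circ_def using v by blast
  qed
  have "card (nb (circ n D) v) = card D" if v: "v \<in> {1..n}" for v
  proof -
    have "bij_betw (cd n v) {j \<in> {1..n}. cd n v j \<in> D} D"
      unfolding bij_betw_def
    proof
      show "inj_on (cd n v) {j \<in> {1..n}. cd n v j \<in> D}" by (rule inj_on_subset[OF cd_inj[OF n]]) auto
      show "cd n v ` {j \<in> {1..n}. cd n v j \<in> D} = D"
      proof safe
        fix \<delta> assume "\<delta> \<in> D"
        then obtain j where "j\<in>{1..n}" "cd n v j = \<delta>" using cd_surj[OF n v] D by force
        then show "\<delta> \<in> cd n v ` {j \<in> {1..n}. cd n v j \<in> D}" using \<open>\<delta>\<in>D\<close> by auto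
      qed
    qed
    then show ?thesis using nbeq[OF v] bij_betw_same_card by metis
  qed
  then show ?thesis unfolding regular_graph_def using sg deg_nb[OF sg] by simp
qed

lemma exists_reg:
  assumes "d < n" and "even (n * d)"
  shows "regular_graphs n d \<noteq> {}"
proof -
  have n: "n > 0" using assms by auto
  define h where "h = d div 2"
  define D where "D = {1..h} \<union> {n-h..n-1} \<union> (if odd d then {n div 2} else {})"
  have h2: "2*h < n" using assms unfolding h_def by auto
  have ev: "odd d \<Longrightarrow> even n" using assms by auto
  have ev2: "odd d \<Longrightarrow> n - n div 2 = n div 2 \<and> 1 \<le> n div 2 \<and> n div 2 < n" using ev n by presburger
  have Dsub: "D \<subseteq> {1..<n}" unfolding D_def using h2 n ev2 by auto
  have sym: "n - \<delta> \<in> D" if "\<delta> \<in> D" for \<delta>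
  proof -
    show ?thesis using that h2 ev2 unfolding D_def by (auto split: if_splits)
  qed
  have c1: "card ({1..h} \<union> {n-h..n-1}) = 2*h"
    by (subst card_Un_disjoint) (use h2 in auto)
  have "card D = d"
  proof (cases "odd d")
    case True
    then have "even n" using assms by auto
    then have "n div 2 \<notin> {1..h} \<union> {n-h..n-1}" using h2 True assms unfolding h_def by auto
    then show ?thesis unfolding D_def using True c1 by (simp add: h_def)
  next
    case False then show ?thesis unfolding D_def using c1 by (simp add: h_def)
  qed
  then have "circ n D \<in> regular_graphs n d"
    using circ_reg[OF n Dsub sym] unfolding regular_graphs_def by simp
  then show ?thesis by auto
qed

lemma frac_cross: "(0::real) < y \<Longrightarrow> 0 < v \<Longrightarrow> x * v \<le> u * y \<Longrightarrow> x/y \<le> u/v"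
  by (simp add: field_simps)

lemma T_bound:
  fixes \<beta> \<eta> C :: real and n d b q :: nat and T S :: "nat set"
  assumes \<beta>: "\<beta> > 1" and \<eta>0: "0 < \<eta>" and \<eta>1: "\<eta> < 1"
    and q: "q = b + 2" and C: "C = 48*q*\<beta>/(d*\<eta>)"
    and dq: "4*q \<le> d" and dq2: "4*q \<le> d*\<eta>" and dn: "8*d+4 \<le> \<eta>*n"
    and TV: "T \<subseteq> {1..n}" and t1: "1 \<le> card T" and tb: "\<beta>*card T \<le> (1-\<eta>)*n"
    and SV: "S \<subseteq> {1..n}" and TS: "T \<subseteq> S" and cS: "card S = nat \<lfloor>\<beta>*card T\<rfloor>"
  shows "real (card {E\<in>regular_graphs n d. {(a,b). a\<in>T \<and> b\<in>{1..n}-S \<and> {a,b}\<in>E} = {}})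
         \<le> (C*card T/n)^(q*card T) * card (regular_graphs n d)"
proof -
  interpret sws n d T "{1..n}-S" by unfold_locales (use TV TS in auto)
  define t where "t = card T"
  define s where "s = card S"
  define w where "w = card ({1..n}-S)"
  have dpos: "d > 0" using dq q by simp
  have npos: "n > 0" using dn \<eta>0 by (cases n) auto
  have tpos: "t > 0" using t1 unfolding t_def by simp
  have s_le: "real s \<le> \<beta>*t" unfolding s_def t_def cS using \<beta> by (intro of_nat_floor) simp
  have w_eq: "w = n - s" unfolding w_def s_def using SV by (simp add: card_Diff_subset finite_subset)
  have sn: "s \<le> n" unfolding s_def using SV by (metis card_atLeastAtMost card_mono diff_Suc_1 finite_atLeastAtMost)
  have w_ge: "\<eta>*n \<le> real w" using w_eq sn s_le tb unfolding t_def by (simp add: of_nat_diff algebra_simps)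
  have wpos: "w > 0" using w_ge \<eta>0 npos
    by (metis less_le_trans mult_pos_pos of_nat_0_less_iff of_nat_less_0_iff linorder_neqE_nat)
  have h1: "4*(q*t) \<le> d*t" using dq by simp
  have h2: "4*(q*t) \<le> d*w"
  proof -
    have "real (4*(q*t)) = 4*q*real t" by simp
    also have "\<dots> \<le> (d*\<eta>) * real t" using dq2 by (intro mult_right_mono) auto
    also have "\<dots> \<le> d * (\<eta>*n)" using tb \<eta>1 \<beta> sn s_le
    proof -
      have "real t \<le> n" using TV unfolding t_def by (metis card_atLeastAtMost card_mono diff_Suc_1 finite_atLeastAtMost of_nat_le_iff)
      then have "\<eta> * t \<le> \<eta> * n" using \<eta>0 by (intro mult_left_mono) auto
      then have "real d * (\<eta> * t) \<le> real d * (\<eta> * n)" by (rule mult_left_mono) auto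
      then show ?thesis by (simp add: algebra_simps)
    qed
    also have "\<dots> \<le> d * real w" using w_ge by (intro mult_left_mono) auto
    finally have "real (4*(q*t)) \<le> real (d*w)" by simp
    then show ?thesis by (simp only: of_nat_le_iff)
  qed
  have h3: "4*(2*d^2+d) \<le> d*w"
  proof -
    have "real (8*d+4) \<le> real w" using dn w_ge by simp
    then have "8*d+4 \<le> w" by (simp only: of_nat_le_iff)
    then have "d*(8*d+4) \<le> d*w" by simp
    then show ?thesis by (simp add: algebra_simps power2_eq_square)
  qed
  have compl: "{1..n} - ({1..n}-S) = S" using SV by auto
  have bnd: "real (card (CC 0)) \<le> (16 * (2*(q*t)+1) * card ({1..n}-({1..n}-S)) / (d * card T * card ({1..n}-S)))^(q*t) * card RG"
    by (rule CC0_bound) (use dpos tpos wpos h1 h2 h3 in \<open>simp_all add: t_def w_def\<close>)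
  have base: "16 * (2*(q*t)+1) * real s / (d * t * w) \<le> C*t/n"
  proof -
    have "1 \<le> q*t" using q tpos by simp
    then have "2*(q*t)+1 \<le> 3*(q*t)" by linarith
    then have "real (2*(q*t)+1) \<le> real (3*(q*t))" by (simp only: of_nat_le_iff)
    then have qt: "real (2*(q*t)+1) \<le> 3*q*t" by simp
    have "16 * (2*(q*t)+1) * real s * (d*\<eta>*n) \<le> 16 * (3*q*t) * (\<beta>*t) * (d*w)"
    proof -
      have a: "16 * real (2*(q*t)+1) \<le> 16 * (3*q*t)" using qt by simp
      have b0: "real d*\<eta>*real n \<le> real d*real w" using w_ge by (simp add: mult.assoc mult_left_mono)
      have b: "real s * (d*\<eta>*n) \<le> (\<beta>*t) * (d*w)"
        using mult_mono[OF s_le b0] \<eta>0 \<beta> by simp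
      have "16 * real (2*(q*t)+1) * (real s * (d*\<eta>*n)) \<le> 16 * (3*q*t) * ((\<beta>*t) * (d*w))"
        by (rule mult_mono[OF a b]) (use \<eta>0 in auto)
      then show ?thesis by (simp add: mult.assoc)
    qed
    also have "\<dots> = 48*q*\<beta>*t * (d*t*w)" by (simp add: algebra_simps)
    finally have "16 * (2*(q*t)+1) * real s * (d*\<eta>*n) \<le> 48*q*\<beta>*t * (d*t*w)" .
    then have "16 * (2*(q*t)+1) * real s / (d * t * w) \<le> 48*q*\<beta>*t / (d*\<eta>*n)"
      by (intro frac_cross) (use dpos tpos wpos \<eta>0 npos in auto)
    also have "\<dots> = C*t/n" unfolding C by (simp add: field_simps)
    finally show ?thesis .
  qed
  have base0: "0 \<le> 16 * (2*(q*t)+1) * real s / (d * t * w)" by simp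
  have "real (card (CC 0)) \<le> (C*t/n)^(q*t) * card RG"
    using bnd order.trans[OF _ mult_right_mono[OF power_mono[OF base base0]]]
    unfolding compl s_def[symmetric] w_def[symmetric] t_def[symmetric] by auto
  moreover have "CC 0 = {E\<in>regular_graphs n d. {(a,b). a\<in>T \<and> b\<in>{1..n}-S \<and> {a,b}\<in>E} = {}}"
    unfolding CC_def RG_def using PP_fin unfolding PP_def by auto
  ultimately show ?thesis unfolding t_def RG_def by simp
qed

lemma bad_cover:
  fixes \<beta> \<eta> :: real and n d :: nat
  assumes \<beta>: "\<beta> > 1" and \<eta>0: "0 < \<eta>" and \<eta>1: "\<eta> < 1"
    and E: "E \<in> regular_graphs n d" and ne: "\<not> has_expansion \<beta> \<eta> {1..n} E"
  shows "\<exists>T S. T \<subseteq> {1..n} \<and> 1 \<le> card T \<and> \<beta>*card T \<le> (1-\<eta>)*n \<and>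
     S \<subseteq> {1..n} \<and> T \<subseteq> S \<and> card S = nat \<lfloor>\<beta>*card T\<rfloor> \<and>
     {(a,b). a\<in>T \<and> b\<in>{1..n}-S \<and> {a,b}\<in>E} = {}"
proof -
  obtain T where TV: "T \<subseteq> {1..n}" and tb: "real (card T) \<le> (1-\<eta>)*n/\<beta>"
    and lt: "real (card (T \<union> nbhd E T)) < \<beta> * card T"
    using ne unfolding has_expansion_def by (auto simp: not_le)
  have sg: "simple_graph {1..n} E" using E unfolding regular_graphs_def regular_graph_def by auto
  have t1: "1 \<le> card T" using lt by (cases "card T = 0") auto
  have tb': "\<beta>*card T \<le> (1-\<eta>)*n" using tb \<beta> by (simp add: pos_le_divide_eq mult.commute)
  define U where "U = T \<union> nbhd E T"
  define s0 where "s0 = nat \<lfloor>\<beta>*card T\<rfloor>"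
  have UV: "U \<subseteq> {1..n}" unfolding U_def nbhd_def using TV sg_edge[OF sg] by blast
  have cU: "card U \<le> s0" unfolding s0_def U_def using lt by (intro le_nat_floor) simp
  have s0n: "s0 \<le> n"
  proof -
    have "real s0 \<le> \<beta> * card T" unfolding s0_def using \<beta> by (intro of_nat_floor) simp
    also have "\<dots> \<le> n" 
    proof -
      have "(1-\<eta>)*real n \<le> 1 * real n" using \<eta>0 by (intro mult_right_mono) auto
      then show ?thesis using tb' by linarith
    qed
    finally show ?thesis by simp
  qed
  have cVU: "card ({1..n} - U) = n - card U" using UV by (simp add: card_Diff_subset finite_subset)
  obtain S' where S': "S' \<subseteq> {1..n} - U" "card S' = s0 - card U" "finite S'"
  proof (rule obtain_subset_with_card_n[of "s0 - card U" "{1..n} - U"])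
    show "s0 - card U \<le> card ({1..n} - U)" using cVU s0n by simp
  qed
  define S where "S = U \<union> S'"
  have fU: "finite U" using UV finite_subset by blast
  have cS: "card S = s0" unfolding S_def using S' cU fU by (subst card_Un_disjoint) auto
  have SV: "S \<subseteq> {1..n}" unfolding S_def using UV S' by auto
  have TS: "T \<subseteq> S" unfolding S_def U_def by auto
  have emp: "{(a,b). a\<in>T \<and> b\<in>{1..n}-S \<and> {a,b}\<in>E} = {}"
    unfolding S_def U_def nbhd_def by auto
  show ?thesis using TV t1 tb' SV TS cS emp unfolding s0_def by blast
qed


lemma main_bound:
  fixes \<beta> \<eta> C :: real and n d b q :: nat
  assumes \<beta>: "\<beta> > 1" and \<eta>0: "0 < \<eta>" and \<eta>1: "\<eta> < 1"
    and b: "b = nat \<lceil>\<beta>\<rceil>" and q: "q = b + 2" and C: "C = 48*q*\<beta>/(d*\<eta>)"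
    and C1: "C \<le> 1" and Ce: "exp 1 ^ (b+1) * C \<le> 1/4"
    and dq: "4*q \<le> d" and dq2: "4*q \<le> d*\<eta>" and dn: "8*d+4 \<le> \<eta>*n"
  shows "real (card {E\<in>regular_graphs n d. \<not> has_expansion \<beta> \<eta> {1..n} E}) \<le> 2/n * card (regular_graphs n d)"
proof -
  define RGn where "RGn = regular_graphs n d"
  define N where "N = real (card RGn)"
  define s0 where "s0 t = nat \<lfloor>\<beta> * real t\<rfloor>" for t :: nat
  define TT where "TT = {T. T \<subseteq> {1..n} \<and> 1 \<le> card T \<and> \<beta>*card T \<le> (1-\<eta>)*n}"
  define SS where "SS T = {S. S \<subseteq> {1..n} \<and> T \<subseteq> S \<and> card S = s0 (card T)}" for T :: "nat set"
  define Z where "Z T S = {E\<in>RGn. {(a,b). a\<in>T \<and> b\<in>{1..n}-S \<and> {a,b}\<in>E} = {}}" for T S :: "nat set"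
  define f where "f t = real (n choose s0 t) * (C*t/n)^(q*t) * N" for t :: nat
  have dpos: "d > 0" using dq q by simp
  have npos: "n > 0" using dn \<eta>0 by (cases n) auto
  have C0: "0 \<le> C" unfolding C using \<beta> \<eta>0 by simp
  have N0: "0 \<le> N" unfolding N_def by simp
  have finRG: "finite RGn"
  proof -
    have "RGn \<subseteq> Pow (Pow {1..n})" unfolding RGn_def regular_graphs_def regular_graph_def simple_graph_def by auto
    then show ?thesis by (rule finite_subset) simp
  qed
  have finTT: "finite TT" unfolding TT_def by (rule finite_subset[of _ "Pow {1..n}"]) auto
  have finSS: "finite (SS T)" for T unfolding SS_def by (rule finite_subset[of _ "Pow {1..n}"]) auto
  have finZ: "finite (Z T S)" for T S unfolding Z_def using finRG by simp
  have cover: "{E\<in>RGn. \<not> has_expansion \<beta> \<eta> {1..n} E} \<subseteq> (\<Union>T\<in>TT. \<Union>S\<in>SS T. Z T S)"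
  proof
    fix E assume "E \<in> {E\<in>RGn. \<not> has_expansion \<beta> \<eta> {1..n} E}"
    then have E: "E \<in> regular_graphs n d" "\<not> has_expansion \<beta> \<eta> {1..n} E" unfolding RGn_def by auto
    from bad_cover[OF \<beta> \<eta>0 \<eta>1 E] obtain T S where
      "T \<subseteq> {1..n} \<and> 1 \<le> card T \<and> \<beta>*card T \<le> (1-\<eta>)*n \<and>
       S \<subseteq> {1..n} \<and> T \<subseteq> S \<and> card S = nat \<lfloor>\<beta>*card T\<rfloor> \<and>
       {(a,b). a\<in>T \<and> b\<in>{1..n}-S \<and> {a,b}\<in>E} = {}" by blast
    then show "E \<in> (\<Union>T\<in>TT. \<Union>S\<in>SS T. Z T S)"
      unfolding TT_def SS_def Z_def s0_def RGn_def using E by blast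
  qed
  have "card {E\<in>RGn. \<not> has_expansion \<beta> \<eta> {1..n} E} \<le> card (\<Union>T\<in>TT. \<Union>S\<in>SS T. Z T S)"
    by (rule card_mono[OF _ cover]) (use finTT finSS finZ in auto)
  also have "\<dots> \<le> (\<Sum>T\<in>TT. card (\<Union>S\<in>SS T. Z T S))" by (rule card_UN_le[OF finTT])
  also have "\<dots> \<le> (\<Sum>T\<in>TT. \<Sum>S\<in>SS T. card (Z T S))"
    by (intro sum_mono card_UN_le finSS)
  finally have c0: "card {E\<in>RGn. \<not> has_expansion \<beta> \<eta> {1..n} E} \<le> (\<Sum>T\<in>TT. \<Sum>S\<in>SS T. card (Z T S))" .
  then have "real (card {E\<in>RGn. \<not> has_expansion \<beta> \<eta> {1..n} E}) \<le> real (\<Sum>T\<in>TT. \<Sum>S\<in>SS T. card (Z T S))"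
    by (simp only: of_nat_le_iff)
  then have c1: "real (card {E\<in>RGn. \<not> has_expansion \<beta> \<eta> {1..n} E}) \<le> (\<Sum>T\<in>TT. \<Sum>S\<in>SS T. real (card (Z T S)))"
    by (simp only: of_nat_sum)
  have c2: "(\<Sum>S\<in>SS T. real (card (Z T S))) \<le> f (card T)" if T: "T \<in> TT" for T
  proof -
    have TV: "T \<subseteq> {1..n}" and t1: "1 \<le> card T" and tb: "\<beta>*card T \<le> (1-\<eta>)*n" using T unfolding TT_def by auto
    have "(\<Sum>S\<in>SS T. real (card (Z T S))) \<le> (\<Sum>S\<in>SS T. (C*card T/n)^(q*card T) * N)"
    proof (rule sum_mono)
      fix S assume "S \<in> SS T"
      then have "S \<subseteq> {1..n}" "T \<subseteq> S" "card S = nat \<lfloor>\<beta>*card T\<rfloor>" unfolding SS_def s0_def by auto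
      from T_bound[OF \<beta> \<eta>0 \<eta>1 q C dq dq2 dn TV t1 tb this]
      show "real (card (Z T S)) \<le> (C*card T/n)^(q*card T) * N" unfolding Z_def N_def RGn_def .
    qed
    also have "\<dots> = real (card (SS T)) * ((C*card T/n)^(q*card T) * N)" by simp
    also have "\<dots> \<le> real (n choose s0 (card T)) * ((C*card T/n)^(q*card T) * N)"
    proof (rule mult_right_mono)
      have "SS T \<subseteq> {B. B \<subseteq> {1..n} \<and> card B = s0 (card T)}" unfolding SS_def by auto
      then have "card (SS T) \<le> card {B. B \<subseteq> {1..n} \<and> card B = s0 (card T)}"
        by (rule card_mono[rotated]) (rule finite_subset[of _ "Pow {1..n}"], auto)
      also have "\<dots> = n choose s0 (card T)" by (subst n_subsets) auto
      finally show "real (card (SS T)) \<le> real (n choose s0 (card T))" by simp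
    qed (use C0 N0 in simp)
    finally show ?thesis unfolding f_def by (simp add: mult.assoc)
  qed
  have c3: "(\<Sum>T\<in>TT. f (card T)) = (\<Sum>y\<in>{1..n}. \<Sum>T\<in>{x. x \<in> TT \<and> card x = y}. f (card T))"
  proof (rule sum.group[symmetric, OF finTT])
    show "card ` TT \<subseteq> {1..n}"
    proof
      fix y assume "y \<in> card ` TT"
      then obtain T where T: "T \<in> TT" "y = card T" by auto
      then have "T \<subseteq> {1..n}" "1 \<le> card T" unfolding TT_def by auto
      then have "card T \<le> card {1..n}" "1 \<le> card T" using card_mono[of "{1..n}" T] by auto
      then show "y \<in> {1..n}" using T by simp
    qed
  qed simp
  have c4: "(\<Sum>T\<in>{x. x \<in> TT \<and> card x = y}. f (card T)) \<le> (1/2)^y / n * N" if y: "y \<in> {1..n}" for y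
  proof (cases "{x. x \<in> TT \<and> card x = y} = {}")
    case True then show ?thesis unfolding True using N0 npos by simp
  next
    case False
    then obtain T0 where "T0 \<in> TT" "card T0 = y" by auto
    then have y1: "1 \<le> y" and yb: "\<beta>*y \<le> (1-\<eta>)*n" unfolding TT_def by auto
    have eqs: "(\<Sum>T\<in>{x. x \<in> TT \<and> card x = y}. f (card T)) = real (card {x. x \<in> TT \<and> card x = y}) * f y"
      by simp
    have cle: "card {x. x \<in> TT \<and> card x = y} \<le> n choose y"
    proof -
      have "{x. x \<in> TT \<and> card x = y} \<subseteq> {B. B \<subseteq> {1..n} \<and> card B = y}" unfolding TT_def by auto
      then have "card {x. x \<in> TT \<and> card x = y} \<le> card {B. B \<subseteq> {1..n} \<and> card B = y}"
        by (rule card_mono[rotated]) (rule finite_subset[of _ "Pow {1..n}"], auto)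
      also have "\<dots> = n choose y" by (subst n_subsets) auto
      finally show ?thesis .
    qed
    have f0: "0 \<le> f y" unfolding f_def using C0 N0 by simp
    have bb: "\<beta> \<le> real b" unfolding b using \<beta> by linarith
    have ys: "y \<le> s0 y" unfolding s0_def
    proof (intro le_nat_floor)
      show "real y \<le> \<beta> * real y" using mult_right_mono[of 1 \<beta> "real y"] \<beta> by simp
    qed
    have sreal: "real (s0 y) \<le> \<beta> * y" unfolding s0_def using \<beta> by (intro of_nat_floor) simp
    have sb: "s0 y \<le> b*y"
    proof -
      have "\<beta> * y \<le> real b * y" using bb by (intro mult_right_mono) auto
      then have "real (s0 y) \<le> real (b*y)" using sreal by simp
      then show ?thesis by (simp only: of_nat_le_iff)
    qed
    have sn: "s0 y \<le> n"
    proof -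
      have "(1-\<eta>)*real n \<le> 1 * real n" using \<eta>0 by (intro mult_right_mono) auto
      then have "real (s0 y) \<le> real n" using sreal yb by linarith
      then show ?thesis by simp
    qed
    have tb: "real (n choose y) * real (n choose s0 y) * (C*y/n)^(q*y) \<le> (1/2)^y / n"
      by (rule term_bound[OF y1 ys sb sn C0 C1 Ce q])
    have "real (card {x. x \<in> TT \<and> card x = y}) * f y \<le> real (n choose y) * f y"
      using cle f0 by (intro mult_right_mono) auto
    also have "\<dots> = (real (n choose y) * real (n choose s0 y) * (C*y/n)^(q*y)) * N"
      unfolding f_def by (simp add: mult.assoc)
    also have "\<dots> \<le> (1/2)^y / n * N" using tb N0 by (rule mult_right_mono)
    finally show ?thesis using eqs by simp
  qed
  have "(\<Sum>T\<in>TT. \<Sum>S\<in>SS T. real (card (Z T S))) \<le> (\<Sum>T\<in>TT. f (card T))"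
    using c2 by (rule sum_mono)
  also have "\<dots> \<le> (\<Sum>y\<in>{1..n}. (1/2)^y / n * N)" unfolding c3 using c4 by (rule sum_mono)
  also have "\<dots> = (\<Sum>y\<in>{1..n}. (1/2::real)^y) * (N / n)"
    by (subst sum_distrib_right) (rule sum.cong, auto)
  also have "\<dots> \<le> 2 * (N / n)"
  proof (rule mult_right_mono)
    show "(\<Sum>y\<in>{1..n}. (1/2::real)^y) \<le> 2"
      using geometric_sum_less[of "1/2::real" "{1..n}"] by simp
  qed (use N0 in simp)
  finally show ?thesis using c1 unfolding N_def RGn_def by simp
qed

theorem lemma5p3:
  fixes \<beta> \<eta> :: real
  assumes "\<beta> > 1" and "0 < \<eta>" and "\<eta> < 1/2"
  shows "\<exists>d0::nat. \<forall>d\<ge>d0. \<forall>\<epsilon>>0. \<exists>N::nat. \<forall>n\<ge>N. even (n * d) \<longrightarrow>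
           measure_pmf.prob (G_nd n d) {E. has_expansion \<beta> \<eta> {1..n} E} \<ge> 1 - \<epsilon>"
proof -
  have \<beta>: "\<beta> > 1" and \<eta>0: "0 < \<eta>" and \<eta>1: "\<eta> < 1" using assms by auto
  define b where "b = nat \<lceil>\<beta>\<rceil>"
  define q where "q = b + 2"
  define ee where "ee = exp (1::real) ^ (b+1)"
  have ee1: "ee \<ge> 1" unfolding ee_def by (rule one_le_power) simp
  define K where "K = 192*q*\<beta>*ee/\<eta>"
  have K1: "4*q \<le> K * \<eta>"
  proof -
    have "4*q \<le> 192*q*\<beta>*ee"
    proof -
      have "1 \<le> \<beta>*ee" using mult_mono[of 1 \<beta> 1 ee] \<beta> ee1 by simp
      then have "real q * 1 \<le> real q * (\<beta>*ee)" by (intro mult_left_mono) auto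
      then show ?thesis by (simp add: algebra_simps)
    qed
    then show ?thesis unfolding K_def using \<eta>0 by simp
  qed
  have K2: "K * \<eta> \<le> K"
  proof -
    have "0 \<le> K" unfolding K_def using \<beta> \<eta>0 ee1 by simp
    then show ?thesis using \<eta>1 \<eta>0 by (simp add: mult_left_le)
  qed
  show ?thesis
  proof (rule exI[of _ "nat \<lceil>K\<rceil> + 1"], intro allI impI)
    fix d :: nat and \<epsilon> :: real
    assume d: "nat \<lceil>K\<rceil> + 1 \<le> d" and \<epsilon>: "\<epsilon> > 0"
    have dK: "K \<le> real d" using d by linarith
    have dpos: "real d > 0" using d by simp
    define C where "C = 48*q*\<beta>/(d*\<eta>)"
    have dq: "4*q \<le> d" using K1 K2 dK by simp
    have dq2: "4*q \<le> d*\<eta>" using K1 dK \<eta>0 by (smt (verit) mult_right_mono)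
    have Ce: "ee * C \<le> 1/4"
    proof -
      have "ee * C = 48*q*\<beta>*ee/(d*\<eta>)" unfolding C_def by simp
      also have "\<dots> \<le> 48*q*\<beta>*ee/(K*\<eta>)"
      proof (rule divide_left_mono)
        show "K*\<eta> \<le> d*\<eta>" using dK \<eta>0 by (intro mult_right_mono) auto
        have "0 < K*\<eta>" using K1 q_def by linarith
        then show "0 < (d*\<eta>) * (K*\<eta>)" using dpos \<eta>0 by simp
      qed (use \<beta> ee1 in simp)
      also have "\<dots> = 1/4"
      proof -
        have Keq: "K*\<eta> = 192*q*\<beta>*ee" unfolding K_def using \<eta>0 by simp
        have pos: "real q*\<beta>*ee > 0" using \<beta> ee1 q_def by simp
        have "q > 0" "ee \<noteq> 0" "\<beta> \<noteq> 0" using \<beta> ee1 q_def by auto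
        then show ?thesis unfolding Keq by (simp add: field_simps)
      qed
      finally show ?thesis .
    qed
    have C1: "C \<le> 1"
    proof -
      have C0: "0 \<le> C" unfolding C_def using \<beta> \<eta>0 by simp
      have "C \<le> ee * C" using mult_right_mono[OF ee1 C0] by simp
      then show ?thesis using Ce by simp
    qed
    show "\<exists>N::nat. \<forall>n\<ge>N. even (n * d) \<longrightarrow>
           measure_pmf.prob (G_nd n d) {E. has_expansion \<beta> \<eta> {1..n} E} \<ge> 1 - \<epsilon>"
    proof (rule exI[of _ "nat \<lceil>(8*d+4)/\<eta>\<rceil> + nat \<lceil>2/\<epsilon>\<rceil> + d + 1"], intro allI impI)
      fix n :: nat assume n: "nat \<lceil>(8*d+4)/\<eta>\<rceil> + nat \<lceil>2/\<epsilon>\<rceil> + d + 1 \<le> n" and ev: "even (n*d)"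
      have dn0: "d < n" using n by simp
      have npos: "real n > 0" using n by simp
      have "(8*d+4)/\<eta> \<le> real n" using n by linarith
      then have dn: "8*d+4 \<le> \<eta>*n" using \<eta>0 by (simp add: pos_divide_le_eq mult.commute)
      have "2/\<epsilon> \<le> real n" using n by linarith
      then have eps: "2/n \<le> \<epsilon>" using \<epsilon> npos by (simp add: field_simps)
      define RG where "RG = regular_graphs n d"
      define Bad where "Bad = {E\<in>RG. \<not> has_expansion \<beta> \<eta> {1..n} E}"
      have ne: "RG \<noteq> {}" unfolding RG_def by (rule exists_reg[OF dn0 ev])
      have fin: "finite RG"
      proof -
        have "RG \<subseteq> Pow (Pow {1..n})" unfolding RG_def regular_graphs_def regular_graph_def simple_graph_def by auto
        then show ?thesis by (rule finite_subset) simp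
      qed
      have bad: "real (card Bad) \<le> 2/n * card RG"
        unfolding Bad_def RG_def
        by (rule main_bound[OF \<beta> \<eta>0 \<eta>1 b_def q_def C_def C1 Ce[unfolded ee_def] dq dq2 dn])
      have split: "card (RG \<inter> {E. has_expansion \<beta> \<eta> {1..n} E}) + card Bad = card RG"
      proof -
        have "RG = (RG \<inter> {E. has_expansion \<beta> \<eta> {1..n} E}) \<union> Bad" "(RG \<inter> {E. has_expansion \<beta> \<eta> {1..n} E}) \<inter> Bad = {}"
          unfolding Bad_def by auto
        then show ?thesis using fin card_Un_disjoint[of "RG \<inter> {E. has_expansion \<beta> \<eta> {1..n} E}" Bad]
          by (metis finite_Int finite_Un)
      qed
      have cpos: "real (card RG) > 0" using ne fin by (simp add: card_gt_0_iff)
      have "measure_pmf.prob (G_nd n d) {E. has_expansion \<beta> \<eta> {1..n} E}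
            = real (card (RG \<inter> {E. has_expansion \<beta> \<eta> {1..n} E})) / card RG"
        unfolding G_nd_def RG_def[symmetric] using measure_pmf_of_set[OF ne fin] by simp
      also have "\<dots> = 1 - real (card Bad) / card RG" using split cpos
        by (simp add: field_simps flip: of_nat_add)
      also have "\<dots> \<ge> 1 - 2/n" using bad cpos by (simp add: field_simps)
      finally show "measure_pmf.prob (G_nd n d) {E. has_expansion \<beta> \<eta> {1..n} E} \<ge> 1 - \<epsilon>"
        using eps by linarith
    qed
  qed
qed


end
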